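(* Let $W_1,\dots,W_m\in\mathbb{R}^{n\times n}$ be signed adjacency matrices of signed digraphs $\mathcal{G}_1,\dots,\mathcal{G}_m$ with $W_k\mathbf{1}=W_k^\top\mathbf{1}=\mathbf{1}$ for all $k$. If $\mathbb{W}=\{W_1,\dots,W_m\}$ is a consensus set for the switched system $\mathbf{x}(t+1)=W_{\sigma(t)}\mathbf{x}(t)$, then for every $k$, $W_k$ is eventually doubly stochastic (hence eventually positive) and $\mathcal{G}_k$ is strongly connected.
   Context: $W_k$ are real matrices (entries of any sign); $\mathcal{G}_k$ has an edge from $j$ to $i$ iff $[W_k]_{ij}\neq 0$. $W$ is eventually positive if there is $t_0\in\mathbb{Z}_{\ge0}$ with $W^t$ entrywise positive for all integers $t\ge t_0$; eventually doubly stochastic means eventually positive with $W\mathbf{1}=W^\top\mathbf{1}=\mathbf{1}$. A switching signal is any map $\sigma:\mathbb{Z}_{\ge0}\to\{1,\dots,m\}$. $\mathbb{W}$ is a consensus set if for every switching signal and every $\mathbf{x}(0)$ there is $\alpha\in\mathbb{R}$ with $\lim_{t\to\infty}\mathbf{x}(t)=\alpha\mathbf{1}$. *)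

theory Defs
  imports "HOL-Analysis.Analysis"
begin

definition ones :: "real ^ 'n" where
  "ones = (\<chi> i. 1)"

primrec mpow :: "real ^ 'n ^ 'n \<Rightarrow> nat \<Rightarrow> real ^ 'n ^ 'n" where
  "mpow W 0 = mat 1"
| "mpow W (Suc t) = W ** mpow W t"

definition eventually_positive :: "real ^ 'n ^ 'n \<Rightarrow> bool" where
  "eventually_positive W \<longleftrightarrow>
     (\<exists>t0::nat. \<forall>t\<ge>t0. \<forall>i j. mpow W t $ i $ j > 0)"

definition eventually_doubly_stochastic :: "real ^ 'n ^ 'n \<Rightarrow> bool" where
  "eventually_doubly_stochastic W \<longleftrightarrow>
     eventually_positive W \<and> W *v ones = ones \<and> transpose W *v ones = ones"

definition graph_edges :: "real ^ 'n ^ 'n \<Rightarrow> ('n \<times> 'n) set" where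
  "graph_edges W = {(j, i). W $ i $ j \<noteq> 0}"

definition strongly_connected :: "real ^ 'n ^ 'n \<Rightarrow> bool" where
  "strongly_connected W \<longleftrightarrow> (\<forall>i j. (i, j) \<in> (graph_edges W)\<^sup>*)"

primrec traj :: "(nat \<Rightarrow> real ^ 'n ^ 'n) \<Rightarrow> (nat \<Rightarrow> nat) \<Rightarrow> real ^ 'n \<Rightarrow> nat \<Rightarrow> real ^ 'n" where
  "traj W \<sigma> x0 0 = x0"
| "traj W \<sigma> x0 (Suc t) = W (\<sigma> t) *v traj W \<sigma> x0 t"

definition consensus_set :: "nat \<Rightarrow> (nat \<Rightarrow> real ^ 'n ^ 'n) \<Rightarrow> bool" where
  "consensus_set m W \<longleftrightarrow>
     (\<forall>\<sigma> :: nat \<Rightarrow> nat. (\<forall>t. \<sigma> t \<in> {1..m}) \<longrightarrow>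
        (\<forall>x0. \<exists>\<alpha>::real. traj W \<sigma> x0 \<longlonglongrightarrow> \<alpha> *\<^sub>R ones))"

end

theory Submission
  imports Defs
begin

lemma traj_const: "traj W (\<lambda>_. k) x t = mpow (W k) t *v x"
  by (induction t) (simp_all add: matrix_vector_mul_assoc)

lemma sum_pres:
  fixes A :: "real ^ 'n ^ 'n"
  assumes "transpose A *v ones = ones"
  shows "sum (\<lambda>i. (A *v x) $ i) UNIV = sum (\<lambda>i. x $ i) UNIV"
proof -
  have c: "\<And>l. (\<Sum>i\<in>UNIV. A $ i $ l) = 1"
  proof -
    fix l
    have "(transpose A *v ones) $ l = 1" using assms by (simp add: ones_def)
    thus "(\<Sum>i\<in>UNIV. A $ i $ l) = 1"
      by (simp add: matrix_vector_mult_def transpose_def ones_def)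
  qed
  have "sum (\<lambda>i. (A *v x) $ i) UNIV = (\<Sum>i\<in>UNIV. \<Sum>l\<in>UNIV. A $ i $ l * x $ l)"
    by (simp add: matrix_vector_mult_def)
  also have "\<dots> = (\<Sum>l\<in>UNIV. \<Sum>i\<in>UNIV. A $ i $ l * x $ l)" by (rule sum.swap)
  also have "\<dots> = (\<Sum>l\<in>UNIV. x $ l * (\<Sum>i\<in>UNIV. A $ i $ l))"
    by (simp add: sum_distrib_left mult.commute)
  also have "\<dots> = sum (\<lambda>i. x $ i) UNIV" using c by simp
  finally show ?thesis .
qed

lemma sum_pow:
  fixes A :: "real ^ 'n ^ 'n"
  assumes "transpose A *v ones = ones"
  shows "sum (\<lambda>i. (mpow A t *v x) $ i) UNIV = sum (\<lambda>i. x $ i) UNIV"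
  by (induction t) (simp_all add: matrix_vector_mul_assoc[symmetric] sum_pres[OF assms])

lemma path_lemma:
  fixes A :: "real ^ 'n ^ 'n"
  shows "mpow A t $ i $ j \<noteq> 0 \<Longrightarrow> (j, i) \<in> (graph_edges A)\<^sup>*"
proof (induction t arbitrary: i)
  case 0
  then show ?case by (simp add: mat_def split: if_splits)
next
  case (Suc t)
  then have "(\<Sum>l\<in>UNIV. A $ i $ l * mpow A t $ l $ j) \<noteq> 0"
    by (simp add: matrix_matrix_mult_def)
  then obtain l where "A $ i $ l * mpow A t $ l $ j \<noteq> 0"
    by (meson sum.neutral)
  then have "A $ i $ l \<noteq> 0" "mpow A t $ l $ j \<noteq> 0" by auto
  with Suc.IH have "(j, l) \<in> (graph_edges A)\<^sup>*" "(l, i) \<in> graph_edges A"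
    by (auto simp: graph_edges_def)
  then show ?case by (rule rtrancl_into_rtrancl)
qed

lemma evpos:
  fixes A :: "real ^ 'n ^ 'n"
  assumes tr: "transpose A *v ones = ones"
    and conv: "\<And>x. \<exists>\<alpha>::real. (\<lambda>t. mpow A t *v x) \<longlonglongrightarrow> \<alpha> *\<^sub>R ones"
  shows "eventually_positive A"
proof -
  have ev: "\<forall>\<^sub>F t in sequentially. mpow A t $ i $ j > 0" for i j
  proof -
    obtain \<alpha> where lim: "(\<lambda>t. mpow A t *v axis j 1) \<longlonglongrightarrow> \<alpha> *\<^sub>R ones"
      using conv by blast
    have s: "sum (\<lambda>i. (mpow A t *v axis j 1) $ i) UNIV = 1" for t
      using sum_pow[OF tr, of t "axis j 1"] by (simp add: axis_def)
    have "(\<lambda>t. sum (\<lambda>i. (mpow A t *v axis j 1) $ i) UNIV) \<longlonglongrightarrow> sum (\<lambda>i. (\<alpha> *\<^sub>R (ones::real^'n)) $ i) UNIV"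
      using tendsto_sum[of UNIV "\<lambda>i t. (mpow A t *v axis j 1) $ i" "\<lambda>i. (\<alpha> *\<^sub>R ones) $ i" sequentially]
        tendsto_vec_nth[OF lim] by (simp add: ones_def)
    then have "(\<lambda>t. 1::real) \<longlonglongrightarrow> \<alpha> * real CARD('n)" using s by (simp add: ones_def mult.commute)
    then have "\<alpha> * real CARD('n) = 1" using LIMSEQ_unique tendsto_const by blast
    then have apos: "\<alpha> > 0"
      by (metis mult_pos_pos not_less_iff_gr_or_eq of_nat_0_less_iff zero_less_card_finite
          zero_less_mult_pos2 zero_less_one)
    have "(\<lambda>t. (mpow A t *v axis j 1) $ i) \<longlonglongrightarrow> (\<alpha> *\<^sub>R ones) $ i"
      by (intro tendsto_vec_nth lim)
    then have "(\<lambda>t. mpow A t $ i $ j) \<longlonglongrightarrow> \<alpha>"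
      by (simp add: matrix_vector_mult_basis column_def ones_def)
    then show ?thesis using apos order_tendstoD(1) by blast
  qed
  have "\<forall>\<^sub>F t in sequentially. \<forall>i. \<forall>j. mpow A t $ i $ j > 0"
    using ev by (simp add: eventually_all_finite)
  then obtain t0 where "\<forall>t\<ge>t0. \<forall>i j. mpow A t $ i $ j > 0"
    unfolding eventually_sequentially by blast
  then show ?thesis unfolding eventually_positive_def by blast
qed

theorem corollary5:
  fixes W :: "nat \<Rightarrow> real ^ 'n ^ 'n" and m :: nat
  assumes "\<forall>k\<in>{1..m}. W k *v ones = ones \<and> transpose (W k) *v ones = ones"
    and "consensus_set m W"
  shows "\<forall>k\<in>{1..m}. eventually_doubly_stochastic (W k) \<and> eventually_positive (W k)
           \<and> strongly_connected (W k)"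
proof
  fix k assume k: "k \<in> {1..m}"
  have conv: "\<exists>\<alpha>::real. (\<lambda>t. mpow (W k) t *v x) \<longlonglongrightarrow> \<alpha> *\<^sub>R ones" for x
    using assms(2) k unfolding consensus_set_def traj_const[symmetric]
    by (metis (no_types, lifting))
  have ep: "eventually_positive (W k)"
    using evpos[OF _ conv] assms(1) k by blast
  then obtain t0 where t0: "\<forall>t\<ge>t0. \<forall>i j. mpow (W k) t $ i $ j > 0"
    unfolding eventually_positive_def by blast
  have "strongly_connected (W k)"
    unfolding strongly_connected_def
  proof (intro allI)
    fix i j
    have "mpow (W k) t0 $ j $ i \<noteq> 0" using t0 by (metis less_irrefl order_refl)
    then show "(i, j) \<in> (graph_edges (W k))\<^sup>*" by (rule path_lemma)
  qed
  then show "eventually_doubly_stochastic (W k) \<and> eventually_positive (W k) \<and> strongly_connected (W k)"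
    using ep assms(1) k unfolding eventually_doubly_stochastic_def by blast
qed

end
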